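(* Let $n\ge2$ and let $P_m(u)=u^m+a_1u^{m-1}+\cdots+a_{m-1}u+a_m$ be a polynomial of degree $m\ge1$ in the polar $n$-complex variable $u$ with polar $n$-complex coefficients $a_l$. Then there exist complex numbers $v_{p+}$ ($p=1,\dots,m$), whose non-real members occur in complex-conjugate pairs, and for even $n$ complex numbers $v_{p-}$ ($p=1,\dots,m$) with the same property, and real numbers $v_{kp},\tilde v_{kp}$ ($k=1,\dots,\lfloor(n-1)/2\rfloor$, $p=1,\dots,m$), such that for every polar $n$-complex $u$ $$P_m(u)=\prod_{p=1}^m(u-u_p),\qquad u_p=e_+v_{p+}+e_-v_{p-}+\sum_{k=1}^{\lfloor(n-1)/2\rfloor}\big(e_kv_{kp}+\tilde e_k\tilde v_{kp}\big),$$ where the $e_-$ term is present only for even $n$ and the product is computed in the complexified algebra (polar $n$-complex numbers with complex components).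
   Context: Polar $n$-complex numbers: $u=x_0+h_1x_1+\cdots+h_{n-1}x_{n-1}$, $x_j\in\mathbb{R}$, $h_0=1$, componentwise addition, bilinear multiplication $h_jh_k=h_{(j+k)\bmod n}$; the complexified algebra allows $x_j\in\mathbb{C}$ with the same rules. Canonical base: $e_+=\frac1n\sum_ph_p$, for even $n$ $e_-=\frac1n\sum_p(-1)^ph_p$, $e_k=\frac2n\sum_p\cos(2\pi kp/n)h_p$, $\tilde e_k=\frac2n\sum_p\sin(2\pi kp/n)h_p$ for $k=1,\dots,\lfloor(n-1)/2\rfloor$. *)

theory Defs
  imports Complex_Main "HOL-Library.Multiset"
begin

text \<open>Complexified polar n-complex numbers are represented as functions
  nat \<Rightarrow> complex whose components with index \<ge> n are zero; component j is the
  coefficient of h_j.  Real polar n-complex numbers are functions nat \<Rightarrow> real,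
  embedded by pcx (only components j < n are used).\<close>

definition pcx :: "nat \<Rightarrow> (nat \<Rightarrow> real) \<Rightarrow> (nat \<Rightarrow> complex)" where
  "pcx n x = (\<lambda>j. if j < n then complex_of_real (x j) else 0)"

definition padd :: "nat \<Rightarrow> (nat \<Rightarrow> complex) \<Rightarrow> (nat \<Rightarrow> complex) \<Rightarrow> (nat \<Rightarrow> complex)" where
  "padd n x y = (\<lambda>j. if j < n then x j + y j else 0)"

definition psub :: "nat \<Rightarrow> (nat \<Rightarrow> complex) \<Rightarrow> (nat \<Rightarrow> complex) \<Rightarrow> (nat \<Rightarrow> complex)" where
  "psub n x y = (\<lambda>j. if j < n then x j - y j else 0)"

definition pscale :: "nat \<Rightarrow> complex \<Rightarrow> (nat \<Rightarrow> complex) \<Rightarrow> (nat \<Rightarrow> complex)" where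
  "pscale n c x = (\<lambda>j. if j < n then c * x j else 0)"

text \<open>Bilinear multiplication with h_j h_k = h_((j+k) mod n).\<close>
definition pmul :: "nat \<Rightarrow> (nat \<Rightarrow> complex) \<Rightarrow> (nat \<Rightarrow> complex) \<Rightarrow> (nat \<Rightarrow> complex)" where
  "pmul n x y = (\<lambda>j. if j < n then
      (\<Sum>a<n. \<Sum>b<n. if (a + b) mod n = j then x a * y b else 0) else 0)"

definition pone :: "nat \<Rightarrow> (nat \<Rightarrow> complex)" where
  "pone n = (\<lambda>j. if j = 0 \<and> 0 < n then 1 else 0)"

definition ppow :: "nat \<Rightarrow> (nat \<Rightarrow> complex) \<Rightarrow> nat \<Rightarrow> (nat \<Rightarrow> complex)" where
  "ppow n x k = (pmul n x ^^ k) (pone n)"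

fun pprod :: "nat \<Rightarrow> (nat \<Rightarrow> nat \<Rightarrow> complex) \<Rightarrow> nat \<Rightarrow> (nat \<Rightarrow> complex)" where
  "pprod n f 0 = pone n"
| "pprod n f (Suc m) = pmul n (pprod n f m) (f (Suc m))"

definition polyP :: "nat \<Rightarrow> nat \<Rightarrow> (nat \<Rightarrow> nat \<Rightarrow> real) \<Rightarrow> (nat \<Rightarrow> real) \<Rightarrow> (nat \<Rightarrow> complex)" where
  "polyP n m a u = padd n (ppow n (pcx n u) m)
      (\<lambda>j. \<Sum>l\<in>{1..m}. pmul n (pcx n (a l)) (ppow n (pcx n u) (m - l)) j)"

definition eplus :: "nat \<Rightarrow> (nat \<Rightarrow> complex)" where
  "eplus n = (\<lambda>j. if j < n then complex_of_real (1 / real n) else 0)"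

definition eminus :: "nat \<Rightarrow> (nat \<Rightarrow> complex)" where
  "eminus n = (\<lambda>j. if j < n then complex_of_real ((-1) ^ j / real n) else 0)"

definition ek :: "nat \<Rightarrow> nat \<Rightarrow> (nat \<Rightarrow> complex)" where
  "ek n k = (\<lambda>j. if j < n then complex_of_real (2 / real n * cos (2 * pi * real k * real j / real n)) else 0)"

definition etk :: "nat \<Rightarrow> nat \<Rightarrow> (nat \<Rightarrow> complex)" where
  "etk n k = (\<lambda>j. if j < n then complex_of_real (2 / real n * sin (2 * pi * real k * real j / real n)) else 0)"

definition uroot :: "nat \<Rightarrow> (nat \<Rightarrow> complex) \<Rightarrow> (nat \<Rightarrow> complex) \<Rightarrow> (nat \<Rightarrow> nat \<Rightarrow> real)
    \<Rightarrow> (nat \<Rightarrow> nat \<Rightarrow> real) \<Rightarrow> nat \<Rightarrow> (nat \<Rightarrow> complex)" where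
  "uroot n vp vm v vt p = (\<lambda>j. if j < n then
      vp p * eplus n j
      + (if even n then vm p * eminus n j else 0)
      + (\<Sum>k\<in>{1..(n - 1) div 2}. complex_of_real (v k p) * ek n k j
                                + complex_of_real (vt k p) * etk n k j)
      else 0)"

text \<open>The multiset of values w_1..w_m is closed under complex conjugation, i.e. its
  non-real members occur in complex-conjugate pairs (with multiplicity).\<close>
definition conj_closed :: "(nat \<Rightarrow> complex) \<Rightarrow> nat \<Rightarrow> bool" where
  "conj_closed w m = (image_mset cnj (image_mset w (mset_set {1..m})) = image_mset w (mset_set {1..m}))"

end

theory Submission imports Defs "HOL-Computational_Algebra.Fundamental_Theorem_Algebra" begin

definition om :: "nat \<Rightarrow> complex" where "om n = cis (2 * pi / real n)"
definition chi :: "nat \<Rightarrow> nat \<Rightarrow> (nat \<Rightarrow> complex) \<Rightarrow> complex" where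
  "chi n j x = (\<Sum>l<n. x l * om n ^ (j * l))"

lemma om_pow: "om n ^ t = cis (2 * pi * real t / real n)"
  unfolding om_def DeMoivre by (simp add: field_simps)

lemma om_n: "n > 0 \<Longrightarrow> om n ^ n = 1"
  by (simp add: om_pow)

lemma om_pow_mod: "n > 0 \<Longrightarrow> om n ^ (s mod n) = om n ^ s"
proof -
  assume n: "n > 0"
  have "om n ^ s = om n ^ (n * (s div n) + s mod n)" by simp
  also have "\<dots> = (om n ^ n) ^ (s div n) * om n ^ (s mod n)" by (simp only: power_add power_mult)
  finally show ?thesis using om_n[OF n] by simp
qed

lemma om_ne1: assumes "n > 0" "\<not> n dvd t" shows "om n ^ t \<noteq> 1"
proof
  assume "om n ^ t = 1"
  hence "cos (2 * pi * real t / real n) = 1" unfolding om_pow by (metis cis.sel(1) one_complex.sel(1))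
  then obtain k :: int where k: "2 * pi * real t / real n = real_of_int k * 2 * pi" using cos_one_2pi_int by blast
  hence "real t = k * real n" using assms(1) by (simp add: field_simps)
  hence "int t = k * int n" by (metis of_int_eq_iff of_int_mult of_int_of_nat_eq)
  hence "int n dvd int t" by simp
  thus False using assms(2) by simp
qed

lemma orth: assumes "n > 0" shows "(\<Sum>l<n. om n ^ (t * l)) = (if n dvd t then of_nat n else 0)"
proof (cases "n dvd t")
  case True
  then obtain q where "t = n * q" by auto
  hence "om n ^ (t * l) = 1" for l by (simp add: power_mult om_n[OF assms])
  thus ?thesis using True by simp
next
  case False
  have "(\<Sum>l<n. om n ^ (t * l)) = (\<Sum>l<n. (om n ^ t) ^ l)" by (simp add: power_mult)
  also have "\<dots> = 0"
  proof -
    have "(om n ^ t) ^ n = 1" by (metis mult.commute om_n[OF assms] power_mult power_one)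
    thus ?thesis using om_ne1[OF assms False] by (simp add: sum_gp_strict)
  qed
  finally show ?thesis using False by simp
qed

lemma ifz: "(if P then a else 0) * c = (if P then a * c else (0::complex))" by simp

lemma chi_pmul: assumes "n > 0" shows "chi n j (pmul n x y) = chi n j x * chi n j y"
proof -
  have "chi n j (pmul n x y) = (\<Sum>c<n. \<Sum>a<n. \<Sum>b<n. (if (a + b) mod n = c then x a * y b * om n ^ (j * c) else 0))"
    unfolding chi_def pmul_def by (intro sum.cong refl) (simp add: sum_distrib_right ifz)
  also have "\<dots> = (\<Sum>a<n. \<Sum>c<n. \<Sum>b<n. (if (a + b) mod n = c then x a * y b * om n ^ (j * c) else 0))"
    by (rule sum.swap)
  also have "\<dots> = (\<Sum>a<n. \<Sum>b<n. \<Sum>c<n. (if (a + b) mod n = c then x a * y b * om n ^ (j * c) else 0))"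
    by (rule sum.cong[OF refl], rule sum.swap)
  also have "\<dots> = (\<Sum>a<n. \<Sum>b<n. x a * y b * om n ^ (j * ((a + b) mod n)))"
    by (intro sum.cong refl) (simp add: sum.delta' assms)
  also have "\<dots> = (\<Sum>a<n. \<Sum>b<n. (x a * om n ^ (j * a)) * (y b * om n ^ (j * b)))"
  proof -
    have "om n ^ (j * ((a + b) mod n)) = om n ^ (j * a) * om n ^ (j * b)" for a b
    proof -
      have pm: "om n ^ (j * k) = (om n ^ k) ^ j" for k by (simp only: mult.commute[of j] power_mult)
      have "om n ^ (j * ((a + b) mod n)) = (om n ^ ((a + b) mod n)) ^ j" by (rule pm)
      also have "\<dots> = (om n ^ (a + b)) ^ j" using om_pow_mod[OF assms] by simp
      also have "\<dots> = (om n ^ a) ^ j * (om n ^ b) ^ j" by (simp only: power_add power_mult_distrib)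
      finally show ?thesis by (simp only: pm)
    qed
    thus ?thesis by (simp add: algebra_simps)
  qed
  also have "\<dots> = chi n j x * chi n j y" unfolding chi_def by (simp add: sum_product)
  finally show ?thesis .
qed


lemma proots_linprod: "proots (\<Prod>x\<in>#N. [:-x, 1:]) = (N :: complex multiset)"
proof (induction N)
  case empty
  then show ?case by simp
next
  case (add x N)
  have nz: "(\<Prod>x\<in>#N. [:-x, 1:]) \<noteq> (0 :: complex poly)"
    by (auto simp: prod_mset_zero_iff)
  have "proots (\<Prod>x\<in>#add_mset x N. [:-x, 1:]) = proots ([:-x, 1:] * (\<Prod>x\<in>#N. [:-x, 1:]))" by simp
  also have "\<dots> = proots [:-x, 1:] + proots (\<Prod>x\<in>#N. [:-x, 1:])"
    using nz by (intro proots_mult) auto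
  also have "\<dots> = add_mset x N" using add.IH by simp
  finally show ?case .
qed

lemma mset_nth_shift: "image_mset (\<lambda>p. xs ! (p - 1)) (mset_set {1..length xs}) = mset xs"
proof -
  have "mset_set {1..length xs} = image_mset Suc (mset_set {0..<length xs})"
    by (subst image_mset_mset_set) (auto simp: atLeastLessThanSuc_atLeastAtMost[symmetric] image_Suc_atLeastLessThan)
  hence "image_mset (\<lambda>p. xs ! (p - 1)) (mset_set {1..length xs}) = image_mset (nth xs) (mset_set {0..<length xs})"
    by (simp add: multiset.map_comp o_def)
  also have "\<dots> = mset (map (nth xs) [0..<length xs])" by simp
  also have "\<dots> = mset xs" by (simp add: map_nth)
  finally show ?thesis .
qed

lemma monic_roots:
  fixes c :: "nat \<Rightarrow> complex"
  shows "\<exists>r. (\<forall>z. z ^ m + (\<Sum>l\<in>{1..m}. c l * z ^ (m - l)) = (\<Prod>p\<in>{1..m}. (z - r p)))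
             \<and> ((\<forall>l. c l \<in> \<real>) \<longrightarrow> conj_closed r m)"
proof -
  define Q where "Q = monom 1 m + (\<Sum>l\<in>{1..m}. monom (c l) (m - l))"
  have polyQ: "poly Q z = z ^ m + (\<Sum>l\<in>{1..m}. c l * z ^ (m - l))" for z
    unfolding Q_def by (simp add: poly_monom poly_sum)
  have coeffQ: "coeff Q i = (if m = i then 1 else 0) + (\<Sum>l\<in>{1..m}. if m - l = i then c l else 0)" for i
    unfolding Q_def by (simp add: coeff_sum coeff_monom)
  have "(\<Sum>l\<in>{1..m}. if m - l = m then c l else 0) = 0" by (rule sum.neutral) auto
  hence cm: "coeff Q m = 1" by (simp add: coeffQ)
  have "degree Q \<le> m" by (rule degree_le) (auto simp: coeffQ intro!: sum.neutral)
  moreover have "m \<le> degree Q" using cm by (intro le_degree) simp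
  ultimately have dQ: "degree Q = m" by simp
  hence lcQ: "lead_coeff Q = 1" using cm by simp
  define M where "M = proots Q"
  have Qeq: "Q = (\<Prod>x\<in>#M. [:-x, 1:])"
    using complex_poly_decompose_multiset[of Q] lcQ unfolding M_def by simp
  have sM: "size M = m" unfolding M_def using size_proots_complex[of Q] dQ by simp
  obtain xs where xs: "mset xs = M" using ex_mset by blast
  have lxs: "length xs = m" using sM xs by (metis size_mset)
  define r where "r = (\<lambda>p. xs ! (p - 1))"
  have im: "image_mset r (mset_set {1..m}) = M"
    unfolding r_def using mset_nth_shift[of xs] lxs xs by simp
  have fact1: "z ^ m + (\<Sum>l\<in>{1..m}. c l * z ^ (m - l)) = (\<Prod>p\<in>{1..m}. (z - r p))" for z
  proof -
    have "z ^ m + (\<Sum>l\<in>{1..m}. c l * z ^ (m - l)) = poly Q z" by (simp add: polyQ)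
    also have "\<dots> = (\<Prod>x\<in>#M. (z - x))" by (subst Qeq) (simp add: poly_prod_mset)
    also have "\<dots> = (\<Prod>p\<in>{1..m}. (z - r p))"
      by (simp add: prod_unfold_prod_mset im[symmetric] multiset.map_comp o_def)
    finally show ?thesis .
  qed
  have fact2: "conj_closed r m" if real: "\<forall>l. c l \<in> \<real>"
  proof -
    have creal: "coeff Q i \<in> \<real>" for i
      unfolding coeffQ using real by (auto intro!: Reals_add sum_in_Reals)
    define Q' where "Q' = (\<Prod>x\<in>#image_mset cnj M. [:-x, 1:])"
    have "poly Q' z = poly Q z" for z
    proof -
      have "poly Q' z = (\<Prod>x\<in>#M. (z - cnj x))"
        unfolding Q'_def by (simp add: poly_prod_mset multiset.map_comp o_def)
      also have "\<dots> = cnj (\<Prod>x\<in>#M. (cnj z - x))"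
        by (induction M) auto
      also have "(\<Prod>x\<in>#M. (cnj z - x)) = poly Q (cnj z)"
        by (subst Qeq) (simp add: poly_prod_mset)
      also have "cnj (poly Q (cnj z)) = poly Q z"
        using poly_cnj_real[of Q "cnj z"] creal by simp
      finally show ?thesis .
    qed
    hence "Q' = Q" using poly_eq_poly_eq_iff by blast
    moreover have "proots Q' = image_mset cnj M" unfolding Q'_def by (rule proots_linprod)
    ultimately have "image_mset cnj M = M" using M_def by simp
    thus ?thesis unfolding conj_closed_def im .
  qed
  show ?thesis using fact1 fact2 by blast
qed


lemma chi_cong: "(\<And>l. l < n \<Longrightarrow> x l = y l) \<Longrightarrow> chi n j x = chi n j y"
  unfolding chi_def by (intro sum.cong) auto

lemma chi_padd: "chi n j (padd n x y) = chi n j x + chi n j y"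
  unfolding chi_def padd_def by (simp add: sum.distrib distrib_right)

lemma chi_psub: "chi n j (psub n x y) = chi n j x - chi n j y"
  unfolding chi_def psub_def by (simp add: sum_subtractf left_diff_distrib)

lemma chi_pone: "n > 0 \<Longrightarrow> chi n j (pone n) = 1"
  unfolding chi_def pone_def by (simp add: ifz sum.delta)

lemma chi_sumf: "chi n j (\<lambda>i. \<Sum>l\<in>S. f l i) = (\<Sum>l\<in>S. chi n j (f l))"
  unfolding chi_def by (simp add: sum_distrib_right sum.swap[of _ S])

lemma chi_ppow: "n > 0 \<Longrightarrow> chi n j (ppow n x k) = chi n j x ^ k"
proof (induction k)
  case 0
  then show ?case by (simp add: ppow_def chi_pone)
next
  case (Suc k)
  have "ppow n x (Suc k) = pmul n x (ppow n x k)" by (simp add: ppow_def)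
  then show ?case using Suc by (simp add: chi_pmul)
qed

lemma chi_pprod: "n > 0 \<Longrightarrow> chi n j (pprod n f m) = (\<Prod>p\<in>{1..m}. chi n j (f p))"
proof (induction m)
  case 0
  then show ?case by (simp add: chi_pone)
next
  case (Suc m)
  then show ?case by (simp add: chi_pmul prod.nat_ivl_Suc')
qed

lemma chi_polyP: "n > 0 \<Longrightarrow> chi n j (polyP n m a u) =
   chi n j (pcx n u) ^ m + (\<Sum>l\<in>{1..m}. chi n j (pcx n (a l)) * chi n j (pcx n u) ^ (m - l))"
  unfolding polyP_def by (simp add: chi_padd chi_sumf chi_pmul chi_ppow)

lemma chi_inv:
  assumes n: "n > 0" and z: "\<And>j. j < n \<Longrightarrow> chi n j z = 0" and l': "l' < n"
  shows "z l' = 0"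
proof -
  have "0 = (\<Sum>j<n. chi n j z * om n ^ (j * (n - l')))" using z by simp
  also have "\<dots> = (\<Sum>j<n. \<Sum>l<n. z l * om n ^ ((l + (n - l')) * j))"
  proof -
    have e: "om n ^ (j*l) * om n ^ (j*(n-l')) = om n ^ ((l + (n - l')) * j)" for j l
      by (metis power_add add_mult_distrib mult.commute)
    show ?thesis unfolding chi_def sum_distrib_right
      by (intro sum.cong refl) (simp only: mult.assoc e)
  qed
  also have "\<dots> = (\<Sum>l<n. z l * (\<Sum>j<n. om n ^ ((l + (n - l')) * j)))"
    by (subst sum.swap) (simp add: sum_distrib_left)
  also have "\<dots> = (\<Sum>l<n. if l = l' then z l * of_nat n else 0)"
  proof (intro sum.cong refl)
    fix l assume l: "l \<in> {..<n}"
    have "n dvd (l + (n - l')) \<longleftrightarrow> l = l'"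
    proof
      assume d: "n dvd (l + (n - l'))"
      show "l = l'"
      proof (rule ccontr)
        assume ne: "l \<noteq> l'"
        have "0 < l + (n - l')" "l + (n - l') < 2 * n" "l + (n - l') \<noteq> n" using l l' ne by auto
        then obtain q where q: "l + (n - l') = n * q" using d by blast
        have "n * q < n * 2" using q \<open>l + (n - l') < 2 * n\<close> by (simp add: mult.commute)
        hence "q < 2" by (simp only: mult_less_cancel1)
        moreover have "q \<noteq> 0" using q \<open>0 < l + (n - l')\<close> by auto
        ultimately have "q = 1" by arith
        with q \<open>l + (n - l') \<noteq> n\<close> show False by simp
      qed
    qed (use l' in auto)
    thus "z l * (\<Sum>j<n. om n ^ ((l + (n - l')) * j)) = (if l = l' then z l * of_nat n else 0)"
      by (simp add: orth[OF n])
  qed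
  also have "\<dots> = z l' * of_nat n" using l' by (simp add: sum.delta)
  finally show ?thesis using n by simp
qed

lemma pprod_zero: "n > 0 \<Longrightarrow> i \<ge> n \<Longrightarrow> pprod n f m i = 0"
  by (cases m) (auto simp: pone_def pmul_def)

lemma om_cnj: "n > 0 \<Longrightarrow> j \<le> n \<Longrightarrow> om n ^ ((n - j) * l) = cnj (om n ^ (j * l))"
proof -
  assume n: "n > 0" and j: "j \<le> n"
  have "om n ^ ((n - j) * l) = cis (2 * pi * real ((n - j) * l) / real n)" by (rule om_pow)
  also have "2 * pi * real ((n - j) * l) / real n = - (2 * pi * real (j * l) / real n) + 2 * pi * real l"
    using j n by (simp add: of_nat_diff field_simps)
  also have "cis (- (2 * pi * real (j * l) / real n) + 2 * pi * real l) = cis (- (2 * pi * real (j * l) / real n))"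
  proof -
    have c1: "cis (2 * pi * real l) = 1" by (rule cis_multiple_2pi) simp
    show ?thesis by (simp only: cis_mult[symmetric] c1 mult_1_right)
  qed
  also have "\<dots> = cnj (om n ^ (j * l))" by (simp add: om_pow cis_cnj)
  finally show ?thesis .
qed

lemma chi_cnj: "n > 0 \<Longrightarrow> j \<le> n \<Longrightarrow> chi n (n - j) (pcx n x) = cnj (chi n j (pcx n x))"
  unfolding chi_def pcx_def by (simp add: om_cnj)

lemma chi_n: "n > 0 \<Longrightarrow> chi n n x = chi n 0 x"
  unfolding chi_def by (simp add: power_mult om_n)

lemma chi_real0: "n > 0 \<Longrightarrow> chi n 0 (pcx n x) \<in> \<real>"
  using chi_cnj[of n 0 x] chi_n[of n "pcx n x"] by (simp add: Reals_cnj_iff)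

lemma chi_realh: "n > 0 \<Longrightarrow> even n \<Longrightarrow> chi n (n div 2) (pcx n x) \<in> \<real>"
proof -
  assume n: "n > 0" and e: "even n"
  hence h: "n - n div 2 = n div 2" by auto
  show ?thesis using chi_cnj[OF n, of "n div 2" x] h by (simp add: Reals_cnj_iff)
qed


lemma chi_two:
  assumes n: "n > 0"
  shows "chi n j (\<lambda>l. if l < n then \<alpha> * om n ^ (s * l) + \<beta> * om n ^ (s' * l) else 0)
       = \<alpha> * (if n dvd (s + j) then of_nat n else 0) + \<beta> * (if n dvd (s' + j) then of_nat n else 0)"
proof -
  have e: "om n ^ (t * l) * om n ^ (j * l) = om n ^ ((t + j) * l)" for t l
    by (simp only: add_mult_distrib power_add)
  have "chi n j (\<lambda>l. if l < n then \<alpha> * om n ^ (s * l) + \<beta> * om n ^ (s' * l) else 0)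
      = (\<Sum>l<n. \<alpha> * om n ^ ((s + j) * l) + \<beta> * om n ^ ((s' + j) * l))"
    unfolding chi_def by (intro sum.cong refl) (simp add: distrib_right mult.assoc e)
  also have "\<dots> = \<alpha> * (\<Sum>l<n. om n ^ ((s + j) * l)) + \<beta> * (\<Sum>l<n. om n ^ ((s' + j) * l))"
    by (simp add: sum.distrib sum_distrib_left)
  finally show ?thesis by (simp only: orth[OF n])
qed

lemma dvd_small: "(n::nat) > 0 \<Longrightarrow> t < 2 * n \<Longrightarrow> (n dvd t) = (t = 0 \<or> t = n)"
proof
  assume n: "n > 0" and t: "t < 2 * n" and d: "n dvd t"
  then obtain q where q: "t = n * q" by blast
  have "n * q < n * 2" using q t by (simp add: mult.commute)
  hence "q < 2" by (simp only: mult_less_cancel1)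
  hence "q = 0 \<or> q = 1" by arith
  thus "t = 0 \<or> t = n" using q by auto
qed auto

lemma chi_eplus: assumes n: "n > 0" and j: "j < n" shows "chi n j (eplus n) = (if j = 0 then 1 else 0)"
proof -
  have "eplus n = (\<lambda>l. if l < n then (1 / of_nat n) * om n ^ (0 * l) + 0 * om n ^ (0 * l) else 0)"
    unfolding eplus_def by (auto simp: of_real_divide)
  hence "chi n j (eplus n) = (1 / of_nat n) * (if n dvd (0 + j) then of_nat n else 0) + 0"
    using chi_two[OF n, of j "1 / of_nat n" 0 0 0] by simp
  thus ?thesis using n j dvd_small[OF n, of j] by auto
qed

lemma om_half: assumes n: "n > 0" "even n" shows "om n ^ ((n div 2) * l) = (-1) ^ l"
proof -
  have "om n ^ (n div 2) = cis (2 * pi * real (n div 2) / real n)" by (rule om_pow)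
  also have "2 * pi * real (n div 2) / real n = pi" using n by (auto simp: real_of_nat_div field_simps)
  finally have "om n ^ (n div 2) = -1" by simp
  thus ?thesis by (simp add: power_mult)
qed

lemma chi_eminus: assumes n: "n > 0" "even n" and j: "j < n"
  shows "chi n j (eminus n) = (if j = n div 2 then 1 else 0)"
proof -
  have "eminus n = (\<lambda>l. if l < n then (1 / of_nat n) * om n ^ ((n div 2) * l) + 0 * om n ^ (0 * l) else 0)"
    unfolding eminus_def using om_half[OF n] by (auto simp: of_real_divide)
  hence "chi n j (eminus n) = (1 / of_nat n) * (if n dvd (n div 2 + j) then of_nat n else 0) + 0"
    using chi_two[OF n(1), of j "1 / of_nat n" "n div 2" 0 0] by simp
  moreover have "n dvd (n div 2 + j) \<longleftrightarrow> j = n div 2"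
    using dvd_small[OF n(1), of "n div 2 + j"] n j by auto
  ultimately show ?thesis using n by auto
qed

lemma cis_cos: "complex_of_real (2 / real n * cos t) = (1 / of_nat n) * cis t + (1 / of_nat n) * cnj (cis t)"
  by (simp add: complex_eq_iff cis.sel)

lemma cis_sin: "complex_of_real (2 / real n * sin t) = (- \<i> / of_nat n) * cis t + (\<i> / of_nat n) * cnj (cis t)"
  by (simp add: complex_eq_iff cis.sel)

lemma chi_ek: assumes n: "n > 0" and k: "1 \<le> k" "k < n" and j: "j < n"
  shows "chi n j (ek n k) = (if k = j then 1 else 0) + (if k = n - j then 1 else 0)"
proof -
  have "ek n k = (\<lambda>l. if l < n then (1 / of_nat n) * om n ^ (k * l) + (1 / of_nat n) * om n ^ ((n - k) * l) else 0)"
  proof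
    fix l
    have "om n ^ (k * l) = cis (2 * pi * real k * real l / real n)" by (simp add: om_pow mult.assoc)
    moreover have "om n ^ ((n - k) * l) = cnj (cis (2 * pi * real k * real l / real n))"
      using om_cnj[OF n, of k l] k by (simp add: om_pow mult.assoc)
    ultimately show "ek n k l = (if l < n then (1 / of_nat n) * om n ^ (k * l) + (1 / of_nat n) * om n ^ ((n - k) * l) else 0)"
      unfolding ek_def by (simp only: cis_cos)
  qed
  hence "chi n j (ek n k) = (1 / of_nat n) * (if n dvd (k + j) then of_nat n else 0) + (1 / of_nat n) * (if n dvd (n - k + j) then of_nat n else 0)"
    using chi_two[OF n, of j "1 / of_nat n" k "1 / of_nat n" "n - k"] by simp
  moreover have "n dvd (k + j) \<longleftrightarrow> k = n - j" using dvd_small[OF n, of "k + j"] k j by auto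
  moreover have "n dvd (n - k + j) \<longleftrightarrow> k = j" using dvd_small[OF n, of "n - k + j"] k j by auto
  ultimately show ?thesis using n by auto
qed

lemma chi_etk: assumes n: "n > 0" and k: "1 \<le> k" "k < n" and j: "j < n"
  shows "chi n j (etk n k) = (if k = j then \<i> else 0) - (if k = n - j then \<i> else 0)"
proof -
  have "etk n k = (\<lambda>l. if l < n then (- \<i> / of_nat n) * om n ^ (k * l) + (\<i> / of_nat n) * om n ^ ((n - k) * l) else 0)"
  proof
    fix l
    have "om n ^ (k * l) = cis (2 * pi * real k * real l / real n)" by (simp add: om_pow mult.assoc)
    moreover have "om n ^ ((n - k) * l) = cnj (cis (2 * pi * real k * real l / real n))"
      using om_cnj[OF n, of k l] k by (simp add: om_pow mult.assoc)
    ultimately show "etk n k l = (if l < n then (- \<i> / of_nat n) * om n ^ (k * l) + (\<i> / of_nat n) * om n ^ ((n - k) * l) else 0)"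
      unfolding etk_def by (simp only: cis_sin)
  qed
  hence "chi n j (etk n k) = (- \<i> / of_nat n) * (if n dvd (k + j) then of_nat n else 0) + (\<i> / of_nat n) * (if n dvd (n - k + j) then of_nat n else 0)"
    using chi_two[OF n, of j "- \<i> / of_nat n" k "\<i> / of_nat n" "n - k"] by simp
  moreover have "n dvd (k + j) \<longleftrightarrow> k = n - j" using dvd_small[OF n, of "k + j"] k j by auto
  moreover have "n dvd (n - k + j) \<longleftrightarrow> k = j" using dvd_small[OF n, of "n - k + j"] k j by auto
  ultimately show ?thesis using n by auto
qed


lemma chi_uroot_lin:
  "chi n j (uroot n vp vm v vt p) = vp p * chi n j (eplus n) + (if even n then vm p * chi n j (eminus n) else 0)
     + (\<Sum>k\<in>{1..(n - 1) div 2}. complex_of_real (v k p) * chi n j (ek n k) + complex_of_real (vt k p) * chi n j (etk n k))"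
proof -
  define K where "K = {1..(n - 1) div 2}"
  define w where "w = (\<lambda>l. om n ^ (j * l))"
  have "chi n j (uroot n vp vm v vt p) = (\<Sum>l<n. (vp p * eplus n l + (if even n then vm p * eminus n l else 0)
      + (\<Sum>k\<in>K. complex_of_real (v k p) * ek n k l + complex_of_real (vt k p) * etk n k l)) * w l)"
    unfolding chi_def uroot_def K_def w_def by (intro sum.cong refl) simp
  also have "\<dots> = (\<Sum>l<n. vp p * (eplus n l * w l)) + (\<Sum>l<n. (if even n then vm p * (eminus n l * w l) else 0))
      + (\<Sum>l<n. \<Sum>k\<in>K. complex_of_real (v k p) * (ek n k l * w l) + complex_of_real (vt k p) * (etk n k l * w l))"
    by (cases "even n") (simp_all add: distrib_right sum.distrib sum_distrib_right mult.assoc)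
  also have "\<dots> = vp p * chi n j (eplus n) + (if even n then vm p * chi n j (eminus n) else 0)
     + (\<Sum>k\<in>K. complex_of_real (v k p) * chi n j (ek n k) + complex_of_real (vt k p) * chi n j (etk n k))"
    unfolding chi_def w_def
    by (simp add: sum_distrib_left sum.distrib sum.swap[of _ K])
  finally show ?thesis unfolding K_def .
qed

lemma chi_uroot:
  assumes n: "n \<ge> 2" and j: "j < n"
  shows "chi n j (uroot n vp vm v vt p) =
     (if j = 0 then vp p else 0) + (if even n \<and> j = n div 2 then vm p else 0)
   + (if 1 \<le> j \<and> j \<le> (n - 1) div 2 then complex_of_real (v j p) + \<i> * complex_of_real (vt j p) else 0)
   + (if 1 \<le> n - j \<and> n - j \<le> (n - 1) div 2 then complex_of_real (v (n - j) p) - \<i> * complex_of_real (vt (n - j) p) else 0)"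
proof -
  define K where "K = {1..(n - 1) div 2}"
  have n0: "n > 0" using n by simp
  have Kn: "k \<in> K \<Longrightarrow> 1 \<le> k \<and> k < n" for k unfolding K_def by auto
  have "(\<Sum>k\<in>K. complex_of_real (v k p) * chi n j (ek n k) + complex_of_real (vt k p) * chi n j (etk n k))
      = (\<Sum>k\<in>K. (if k = j then complex_of_real (v k p) + \<i> * complex_of_real (vt k p) else 0)
                + (if k = n - j then complex_of_real (v k p) - \<i> * complex_of_real (vt k p) else 0))"
  proof (intro sum.cong refl)
    fix k assume k: "k \<in> K"
    show "complex_of_real (v k p) * chi n j (ek n k) + complex_of_real (vt k p) * chi n j (etk n k) =
         (if k = j then complex_of_real (v k p) + \<i> * complex_of_real (vt k p) else 0)
                + (if k = n - j then complex_of_real (v k p) - \<i> * complex_of_real (vt k p) else 0)"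
      using Kn[OF k] j n0 k j
      by (simp add: chi_ek chi_etk algebra_simps)
  qed
  also have "\<dots> = (if j \<in> K then complex_of_real (v j p) + \<i> * complex_of_real (vt j p) else 0)
      + (if n - j \<in> K then complex_of_real (v (n - j) p) - \<i> * complex_of_real (vt (n - j) p) else 0)"
    by (simp add: sum.distrib sum.delta' K_def)
  finally have S: "(\<Sum>k\<in>{1..(n - 1) div 2}. complex_of_real (v k p) * chi n j (ek n k) + complex_of_real (vt k p) * chi n j (etk n k)) =
      (if j \<in> K then complex_of_real (v j p) + \<i> * complex_of_real (vt j p) else 0)
      + (if n - j \<in> K then complex_of_real (v (n - j) p) - \<i> * complex_of_real (vt (n - j) p) else 0)"
    unfolding K_def .
  show ?thesis unfolding chi_uroot_lin S using n0 j
    by (simp add: chi_eplus chi_eminus K_def)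
qed


theorem mainTheorem18:
  fixes n m :: nat and a :: "nat \<Rightarrow> nat \<Rightarrow> real"
  assumes "n \<ge> 2" and "m \<ge> 1"
  shows "\<exists>(vp :: nat \<Rightarrow> complex) (vm :: nat \<Rightarrow> complex) (v :: nat \<Rightarrow> nat \<Rightarrow> real) (vt :: nat \<Rightarrow> nat \<Rightarrow> real).
           conj_closed vp m \<and> (even n \<longrightarrow> conj_closed vm m) \<and>
           (\<forall>u :: nat \<Rightarrow> real. polyP n m a u = pprod n (\<lambda>p. psub n (pcx n u) (uroot n vp vm v vt p)) m)"
proof -
  have n2: "n \<ge> 2" by fact
  hence n0: "n > 0" by simp
  define c where "c = (\<lambda>j l. chi n j (pcx n (a l)))"
  have "\<forall>j. \<exists>r. (\<forall>z. z ^ m + (\<Sum>l\<in>{1..m}. c j l * z ^ (m - l)) = (\<Prod>p\<in>{1..m}. (z - r p)))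
             \<and> ((\<forall>l. c j l \<in> \<real>) \<longrightarrow> conj_closed r m)"
    using monic_roots by blast
  then obtain R where R: "\<And>j z. z ^ m + (\<Sum>l\<in>{1..m}. c j l * z ^ (m - l)) = (\<Prod>p\<in>{1..m}. (z - R j p))"
     and Rc: "\<And>j. (\<forall>l. c j l \<in> \<real>) \<Longrightarrow> conj_closed (R j) m"
    by metis
  define vp where "vp = R 0"
  define vm where "vm = R (n div 2)"
  define v where "v = (\<lambda>k p. Re (R k p))"
  define vt where "vt = (\<lambda>k p. Im (R k p))"
  have c1: "conj_closed vp m" unfolding vp_def by (rule Rc) (simp add: c_def chi_real0[OF n0])
  have c2: "even n \<longrightarrow> conj_closed vm m" unfolding vm_def using chi_realh[OF n0] by (auto intro!: Rc simp: c_def)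
  have main: "polyP n m a u = pprod n (\<lambda>p. psub n (pcx n u) (uroot n vp vm v vt p)) m" for u
  proof
    fix i
    define L where "L = polyP n m a u"
    define P where "P = pprod n (\<lambda>p. psub n (pcx n u) (uroot n vp vm v vt p)) m"
    show "L i = P i"
    proof (cases "i < n")
      case False
      thus ?thesis unfolding L_def P_def using pprod_zero[OF n0] by (simp add: polyP_def padd_def)
    next
      case True
      have "chi n j (psub n L P) = 0" if j: "j < n" for j
      proof -
        define U where "U = chi n j (pcx n u)"
        have cL: "chi n j L = U ^ m + (\<Sum>l\<in>{1..m}. c j l * U ^ (m - l))"
          unfolding L_def U_def c_def by (rule chi_polyP[OF n0])
        have cP: "chi n j P = (\<Prod>p\<in>{1..m}. (U - chi n j (uroot n vp vm v vt p)))"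
          unfolding P_def U_def by (simp add: chi_pprod[OF n0] chi_psub)
        have "chi n j L = chi n j P"
        proof -
          have "j = 0 \<or> (even n \<and> j = n div 2) \<or> (1 \<le> j \<and> j \<le> (n - 1) div 2)
            \<or> (1 \<le> n - j \<and> n - j \<le> (n - 1) div 2)" using j by presburger
          then consider (z) "j = 0" | (h) "even n \<and> j = n div 2" | (lo) "1 \<le> j \<and> j \<le> (n - 1) div 2"
            | (hi) "1 \<le> n - j \<and> n - j \<le> (n - 1) div 2" by blast
          thus ?thesis
          proof cases
            case z
            have e: "chi n j (uroot n vp vm v vt p) = R j p" for p
              using chi_uroot[OF n2 j, of vp vm v vt p] z n2 by (auto simp: vp_def)
            show ?thesis unfolding cL cP e by (rule R)
          next
            case h
            have e: "chi n j (uroot n vp vm v vt p) = R j p" for p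
              using chi_uroot[OF n2 j, of vp vm v vt p] h n2 by (auto simp: vm_def)
            show ?thesis unfolding cL cP e by (rule R)
          next
            case lo
            have e: "chi n j (uroot n vp vm v vt p) = R j p" for p
              using chi_uroot[OF n2 j, of vp vm v vt p] lo n2 
              by (auto simp: v_def vt_def complex_eq_iff)
            show ?thesis unfolding cL cP e by (rule R)
          next
            case hi
            define k where "k = n - j"
            have jk: "j = n - k" "k \<le> n" using j unfolding k_def by auto
            have f1: "j \<noteq> 0" "\<not> (even n \<and> j = n div 2)" "\<not> (1 \<le> j \<and> j \<le> (n - 1) div 2)"
              using hi j by presburger+
            have "chi n j (uroot n vp vm v vt p) = complex_of_real (v k p) - \<i> * complex_of_real (vt k p)" for p
              using chi_uroot[OF n2 j, of vp vm v vt p] f1 hi unfolding k_def[symmetric] by simp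
            hence "chi n j (uroot n vp vm v vt p) = cnj (R k p)" for p
              by (simp add: v_def vt_def complex_eq_iff)
            moreover have "U = cnj (chi n k (pcx n u))" unfolding U_def jk by (rule chi_cnj[OF n0 jk(2)])
            moreover have "c j l = cnj (c k l)" for l unfolding c_def jk by (rule chi_cnj[OF n0 jk(2)])
            ultimately have "chi n j L = cnj (chi n k (pcx n u) ^ m + (\<Sum>l\<in>{1..m}. c k l * chi n k (pcx n u) ^ (m - l)))"
              and "chi n j P = cnj (\<Prod>p\<in>{1..m}. (chi n k (pcx n u) - R k p))"
              unfolding cL cP by simp_all
            thus ?thesis by (simp only: R)
          qed
        qed
        thus ?thesis by (simp add: chi_psub)
      qed
      hence "psub n L P i = 0" using chi_inv[OF n0 _ True] by blast
      thus ?thesis using True by (simp add: psub_def)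
    qed
  qed
  show ?thesis using c1 c2 main by blast
qed

end
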